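(* Let $\theta\sim\mathrm{Beta}(a,b)$ with $a,b>0$ and, given $\theta$, let $X_1,X_2,\dots$ be i.i.d. $\mathrm{Bernoulli}(\theta)$; let $\mathcal{F}_n=\sigma(X_1,\dots,X_n)$ and $m_n=\mathbb{E}[\theta\mid\mathcal{F}_n]$. Let $(K_n)$ be positive integers with $K_n=o(\sqrt n)$. Then $$\sup_{1\le k\le K_n}\bigl|\mathbb{E}[(1-\theta)^k\mid\mathcal{F}_n]-(1-m_n)^k\bigr|\to0\quad\text{a.s.}$$ *)

theory Defs
  imports "HOL-Probability.Probability" "HOL-Library.Landau_Symbols"
begin

definition beta_density :: "real \<Rightarrow> real \<Rightarrow> real \<Rightarrow> real" where
  "beta_density a b t =
     (if 0 < t \<and> t < 1 then t powr (a - 1) * (1 - t) powr (b - 1) / Beta a b else 0)"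

text \<open>Natural filtration of the observations: F n is generated by X_1,...,X_n,
  which are X 0, ..., X (n-1) here (0-based indexing).\<close>
definition obs_filtration :: "'w measure \<Rightarrow> (nat \<Rightarrow> 'w \<Rightarrow> bool) \<Rightarrow> nat \<Rightarrow> 'w measure" where
  "obs_filtration M X n = sigma (space M) {X i -` {True} \<inter> space M | i. i < n}"

text \<open>Joint law of (theta, X_1, X_2, ...): theta ~ Beta(a,b) and, given theta,
  the X_i are i.i.d. Bernoulli(theta). This is expressed by specifying all
  finite-dimensional joint probabilities, which determine the joint law.\<close>
definition beta_bernoulli_model ::
  "'w measure \<Rightarrow> real \<Rightarrow> real \<Rightarrow> ('w \<Rightarrow> real) \<Rightarrow> (nat \<Rightarrow> 'w \<Rightarrow> bool) \<Rightarrow> bool" where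
  "beta_bernoulli_model M a b \<theta> X \<longleftrightarrow>
     prob_space M \<and> \<theta> \<in> borel_measurable M \<and>
     (\<forall>i. X i \<in> measurable M (count_space UNIV)) \<and>
     (\<forall>A \<in> sets borel. \<forall>n. \<forall>x :: nat \<Rightarrow> bool.
        measure M {\<omega> \<in> space M. \<theta> \<omega> \<in> A \<and> (\<forall>i<n. X i \<omega> = x i)} =
        (LINT t:A|lborel. t ^ card {i. i < n \<and> x i} * (1 - t) ^ card {i. i < n \<and> \<not> x i}
                            * beta_density a b t))"

end

theory Submission
  imports Defs
begin


lemma Beta_pos: "p > 0 \<Longrightarrow> q > 0 \<Longrightarrow> Beta p q > (0::real)"
  by (simp add: Beta_altdef rGamma_inverse_Gamma)

lemma beta_kernel_integral:
  fixes p q :: real assumes p: "p > 0" and q: "q > 0"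
  shows "integrable lborel (\<lambda>t. if 0 < t \<and> t < 1 then t powr (p-1) * (1-t) powr (q-1) else 0)"
    "(LINT t|lborel. (if 0 < t \<and> t < 1 then t powr (p-1) * (1-t) powr (q-1) else 0)) = Beta p q"
proof -
  have eq: "(\<lambda>t. if 0 < t \<and> t < 1 then t powr (p-1) * (1-t) powr (q-1) else 0) =
     (\<lambda>t. indicator {0..1} t *\<^sub>R (t powr (p-1) * (1-t) powr (q-1)))"
    by (auto simp: indicator_def fun_eq_iff)
  show "integrable lborel (\<lambda>t. if 0 < t \<and> t < 1 then t powr (p-1) * (1-t) powr (q-1) else 0)"
    using integrable_Beta[OF p q] unfolding eq set_integrable_def .
  have "(LINT t:{0..1}|lborel. t powr (p-1) * (1-t) powr (q-1)) = integral {0..1} (\<lambda>t. t powr (p-1) * (1-t) powr (q-1))"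
    by (rule set_borel_integral_eq_integral(2)[OF integrable_Beta[OF p q]])
  also have "\<dots> = Beta p q" using has_integral_Beta_real[OF p q] by (simp add: integral_unique)
  finally show "(LINT t|lborel. (if 0 < t \<and> t < 1 then t powr (p-1) * (1-t) powr (q-1) else 0)) = Beta p q"
    unfolding eq set_lebesgue_integral_def .
qed

lemma beta_moment:
  fixes a b :: real assumes a: "a > 0" and b: "b > 0"
  shows "integrable lborel (\<lambda>t. t ^ j * (1-t) ^ m * beta_density a b t)"
    "(LINT t|lborel. t ^ j * (1-t) ^ m * beta_density a b t) = Beta (a + j) (b + m) / Beta a b"
proof -
  have eq: "(\<lambda>t. t ^ j * (1-t) ^ m * beta_density a b t) =
    (\<lambda>t. (if 0 < t \<and> t < 1 then t powr ((a + j)-1) * (1-t) powr ((b+m)-1) else 0) / Beta a b)"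
  proof
    fix t :: real
    show "t ^ j * (1-t) ^ m * beta_density a b t =
    (if 0 < t \<and> t < 1 then t powr ((a + j)-1) * (1-t) powr ((b+m)-1) else 0) / Beta a b"
    proof (cases "0 < t \<and> t < 1")
      case True
      then have "t powr ((a + j)-1) = t ^ j * t powr (a - 1)"
        by (simp add: powr_add[symmetric] powr_realpow[symmetric] algebra_simps)
      moreover have "(1-t) powr ((b + m)-1) = (1-t) ^ m * (1-t) powr (b - 1)"
        using True by (simp add: powr_add[symmetric] powr_realpow[symmetric] algebra_simps)
      ultimately show ?thesis using True by (simp add: beta_density_def)
    qed (auto simp: beta_density_def)
  qed
  have p: "a + j > 0" "b + m > 0" using a b by auto
  show "integrable lborel (\<lambda>t. t ^ j * (1-t) ^ m * beta_density a b t)"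
    unfolding eq by (intro integrable_divide beta_kernel_integral p)
  show "(LINT t|lborel. t ^ j * (1-t) ^ m * beta_density a b t) = Beta (a + j) (b + m) / Beta a b"
    unfolding eq by (simp add: beta_kernel_integral(2)[OF p])
qed



definition atom :: "'w measure \<Rightarrow> (nat \<Rightarrow> 'w \<Rightarrow> bool) \<Rightarrow> nat \<Rightarrow> (nat \<Rightarrow> bool) \<Rightarrow> 'w set" where
  "atom M X n x = {\<omega> \<in> space M. \<forall>i<n. X i \<omega> = x i}"

definition gens :: "'w measure \<Rightarrow> (nat \<Rightarrow> 'w \<Rightarrow> bool) \<Rightarrow> nat \<Rightarrow> 'w set set" where
  "gens M X n = {X i -` {True} \<inter> space M | i. i < n}"

lemma obs_filtration_gens: "obs_filtration M X n = sigma (space M) (gens M X n)"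
  by (simp add: obs_filtration_def gens_def)

lemma gens_Pow: "gens M X n \<subseteq> Pow (space M)"
  by (auto simp: gens_def)

lemma sets_obs: "sets (obs_filtration M X n) = sigma_sets (space M) (gens M X n)"
  unfolding obs_filtration_gens by (rule sets_measure_of[OF gens_Pow])

lemma space_obs: "space (obs_filtration M X n) = space M"
  unfolding obs_filtration_gens by (rule space_measure_of[OF gens_Pow])

lemma saturated:
  assumes "A \<in> sets (obs_filtration M X n)"
  shows "A \<subseteq> space M \<and> (\<forall>\<omega>\<in>A. \<forall>\<omega>'\<in>space M. (\<forall>i<n. X i \<omega> = X i \<omega>') \<longrightarrow> \<omega>' \<in> A)"
  using assms unfolding sets_obs
proof (induction rule: sigma_sets.induct)
  case (Basic a)
  then show ?case by (auto simp: gens_def)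
next
  case Empty
  then show ?case by simp
next
  case (Compl a)
  then show ?case by blast
next
  case (Union a)
  show ?case
  proof (intro conjI ballI impI)
    show "\<Union>(range a) \<subseteq> space M" using Union by (simp add: UN_subset_iff)
  next
    fix \<omega> \<omega>' assume w: "\<omega> \<in> \<Union>(range a)" "\<omega>' \<in> space M" "\<forall>i<n. X i \<omega> = X i \<omega>'"
    then obtain j where j: "\<omega> \<in> a j" by auto
    have "\<omega>' \<in> a j" using Union[of j] j w(2,3) by simp
    then show "\<omega>' \<in> \<Union>(range a)" by auto
  qed
qed

locale bbm =
  fixes M :: "'w measure" and a b :: real and \<theta> :: "'w \<Rightarrow> real" and X :: "nat \<Rightarrow> 'w \<Rightarrow> bool"
  assumes a: "a > 0" and b: "b > 0" and model: "beta_bernoulli_model M a b \<theta> X"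
begin

lemma ps: "prob_space M" using model by (simp add: beta_bernoulli_model_def)

lemma theta_meas[measurable]: "\<theta> \<in> borel_measurable M" using model by (simp add: beta_bernoulli_model_def)

lemma X_meas[measurable]: "X i \<in> measurable M (count_space UNIV)" using model by (simp add: beta_bernoulli_model_def)

lemma model_eq: "A \<in> sets borel \<Longrightarrow>
        measure M {\<omega> \<in> space M. \<theta> \<omega> \<in> A \<and> (\<forall>i<n. X i \<omega> = x i)} =
        (LINT t:A|lborel. t ^ card {i. i < n \<and> x i} * (1 - t) ^ card {i. i < n \<and> \<not> x i}
                            * beta_density a b t)"
  using model by (simp add: beta_bernoulli_model_def)

lemma gens_sets: "gens M X n \<subseteq> sets M"
  unfolding gens_def by (auto intro: measurable_sets[OF X_meas])

lemma subalg: "subalgebra M (obs_filtration M X n)"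
  unfolding subalgebra_def space_obs sets_obs
  using sets.sigma_sets_subset[OF gens_sets] by simp

lemma sfs: "sigma_finite_subalgebra M (obs_filtration M X n)"
proof -
  interpret prob_space M by (rule ps)
  show ?thesis
    by (rule finite_measure_subalgebra_is_sigma_finite)
       (simp add: finite_measure_subalgebra_def finite_measure_subalgebra_axioms_def subalg finite_measure_axioms)
qed

lemma atom_F: "atom M X n x \<in> sets (obs_filtration M X n)"
proof -
  have "m \<le> n \<Longrightarrow> atom M X m x \<in> sets (obs_filtration M X n)" for m
  proof (induction m)
    case 0
    have "atom M X 0 x = space (obs_filtration M X n)" by (simp add: atom_def space_obs)
    then show ?case by (metis sets.top)
  next
    case (Suc m)
    have g: "X m -` {True} \<inter> space M \<in> sets (obs_filtration M X n)"
    proof -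
      have "m < n" using Suc.prems by simp
      then have "X m -` {True} \<inter> space M \<in> gens M X n" unfolding gens_def by blast
      then show ?thesis unfolding sets_obs by (rule sigma_sets.Basic)
    qed
    have h: "atom M X m x \<in> sets (obs_filtration M X n)" using Suc by simp
    show ?case
    proof (cases "x m")
      case True
      then have "atom M X (Suc m) x = atom M X m x \<inter> (X m -` {True} \<inter> space M)"
        by (auto simp: atom_def less_Suc_eq)
      then show ?thesis using g h by (metis sets.Int)
    next
      case False
      then have "atom M X (Suc m) x = atom M X m x \<inter> (space (obs_filtration M X n) - (X m -` {True} \<inter> space M))"
        by (auto simp: atom_def less_Suc_eq space_obs)
      then show ?thesis using g h by (metis sets.Int sets.compl_sets)
    qed
  qed
  then show ?thesis by simp
qed

lemma atom_M[measurable]: "atom M X n x \<in> sets M"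
  using atom_F subalg unfolding subalgebra_def by blast

end


definition Lk :: "nat \<Rightarrow> (nat \<Rightarrow> bool) \<Rightarrow> real \<Rightarrow> real" where
  "Lk n x t = t ^ card {i. i < n \<and> x i} * (1 - t) ^ card {i. i < n \<and> \<not> x i}"

context bbm begin

lemma Beta_ab: "Beta a b > 0" using Beta_pos a b by simp

lemma beta_nonneg: "beta_density a b t \<ge> 0"
  using Beta_ab by (auto simp: beta_density_def)

lemma g_nonneg: "Lk n x t * beta_density a b t \<ge> 0"
proof (cases "0 < t \<and> t < 1")
  case True
  then show ?thesis using beta_nonneg by (auto simp: Lk_def)
next
  case False
  then show ?thesis by (auto simp: beta_density_def)
qed

lemma g_int: "integrable lborel (\<lambda>t. Lk n x t * beta_density a b t)"
  unfolding Lk_def using beta_moment(1)[OF a b] .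

lemma g_meas[measurable]: "(\<lambda>t. Lk n x t * beta_density a b t) \<in> borel_measurable borel"
  using borel_measurable_integrable[OF g_int[of n x]] by simp

lemma distr_atom:
  "distr (density M (\<lambda>\<omega>. ennreal (indicator (atom M X n x) \<omega>))) borel \<theta>
     = density lborel (\<lambda>t. ennreal (Lk n x t * beta_density a b t))"
  (is "distr ?N borel \<theta> = ?D")
proof (rule measure_eqI)
  show "sets (distr ?N borel \<theta>) = sets ?D" by simp
next
  fix A assume "A \<in> sets (distr ?N borel \<theta>)"
  then have A[measurable]: "A \<in> sets borel" by simp
  interpret prob_space M by (rule ps)
  let ?S = "atom M X n x"
  have tm: "\<theta> \<in> measurable ?N borel" by simp
  have "emeasure (distr ?N borel \<theta>) A = emeasure ?N (\<theta> -` A \<inter> space ?N)"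
    by (rule emeasure_distr[OF tm]) simp
  also have "\<dots> = (\<integral>\<^sup>+ \<omega>. ennreal (indicator ?S \<omega>) * indicator (\<theta> -` A \<inter> space M) \<omega> \<partial>M)"
    by (subst emeasure_density) auto
  also have "\<dots> = (\<integral>\<^sup>+ \<omega>. indicator (?S \<inter> (\<theta> -` A \<inter> space M)) \<omega> \<partial>M)"
    by (intro nn_integral_cong) (simp add: indicator_def)
  also have "\<dots> = emeasure M (?S \<inter> (\<theta> -` A \<inter> space M))"
    by (intro nn_integral_indicator) measurable
  also have "?S \<inter> (\<theta> -` A \<inter> space M) = {\<omega> \<in> space M. \<theta> \<omega> \<in> A \<and> (\<forall>i<n. X i \<omega> = x i)}"
    unfolding atom_def by blast
  also have "emeasure M \<dots> = ennreal (measure M {\<omega> \<in> space M. \<theta> \<omega> \<in> A \<and> (\<forall>i<n. X i \<omega> = x i)})"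
    by (rule emeasure_eq_measure)
  also have "\<dots> = ennreal (LINT t:A|lborel. Lk n x t * beta_density a b t)"
    unfolding model_eq[OF A] Lk_def ..
  also have "\<dots> = (\<integral>\<^sup>+ t. ennreal (indicator A t * (Lk n x t * beta_density a b t)) \<partial>lborel)"
    unfolding set_lebesgue_integral_def real_scaleR_def
    by (rule nn_integral_eq_integral[symmetric])
       (use integrable_mult_indicator[OF _ g_int, of A n x] in \<open>auto simp: g_nonneg\<close>)
  also have "\<dots> = emeasure ?D A"
    by (subst emeasure_density) (auto intro!: nn_integral_cong simp: indicator_def)
  finally show "emeasure (distr ?N borel \<theta>) A = emeasure ?D A" .
qed

lemma set_int_theta:
  assumes h[measurable]: "h \<in> borel_measurable borel"
  shows "(\<integral>\<omega>. indicator (atom M X n x) \<omega> * h (\<theta> \<omega>) \<partial>M) = (LINT t|lborel. Lk n x t * beta_density a b t * h t)"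
proof -
  let ?S = "atom M X n x"
  let ?N = "density M (\<lambda>\<omega>. ennreal (indicator ?S \<omega>))"
  have "(\<integral>\<omega>. indicator ?S \<omega> * h (\<theta> \<omega>) \<partial>M) = integral\<^sup>L ?N (\<lambda>\<omega>. h (\<theta> \<omega>))"
    by (subst integral_density) auto
  also have "\<dots> = integral\<^sup>L (distr ?N borel \<theta>) h"
    by (rule integral_distr[symmetric]) auto
  also have "\<dots> = integral\<^sup>L (density lborel (\<lambda>t. ennreal (Lk n x t * beta_density a b t))) h"
    unfolding distr_atom ..
  also have "\<dots> = (LINT t|lborel. Lk n x t * beta_density a b t * h t)"
    by (subst integral_density) (auto simp: g_nonneg)
  finally show ?thesis .
qed

end


definition pat :: "(nat \<Rightarrow> 'w \<Rightarrow> bool) \<Rightarrow> nat \<Rightarrow> 'w \<Rightarrow> nat \<Rightarrow> bool" where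
  "pat X n \<omega> = (\<lambda>i. i < n \<and> X i \<omega>)"

definition pats :: "nat \<Rightarrow> (nat \<Rightarrow> bool) set" where
  "pats n = {x. \<forall>i. x i \<longrightarrow> i < n}"

definition cval :: "real \<Rightarrow> real \<Rightarrow> nat \<Rightarrow> (nat \<Rightarrow> bool) \<Rightarrow> (real \<Rightarrow> real) \<Rightarrow> real" where
  "cval a b n x h = (LINT t|lborel. Lk n x t * beta_density a b t * h t) / (LINT t|lborel. Lk n x t * beta_density a b t)"

lemma finite_pats: "finite (pats n)"
proof (rule finite_subset)
  show "pats n \<subseteq> (\<lambda>S i. i \<in> S) ` Pow {..<n}"
  proof
    fix x assume "x \<in> pats n"
    then have "x = (\<lambda>i. i \<in> {i. x i})" "{i. x i} \<in> Pow {..<n}" by (auto simp: pats_def)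
    then show "x \<in> (\<lambda>S i. i \<in> S) ` Pow {..<n}" by blast
  qed
qed simp

lemma pat_pats: "pat X n \<omega> \<in> pats n" by (simp add: pat_def pats_def)

context bbm begin

lemma in_atom_iff: "x \<in> pats n \<Longrightarrow> \<omega> \<in> space M \<Longrightarrow> \<omega> \<in> atom M X n x \<longleftrightarrow> pat X n \<omega> = x"
proof
  assume x: "x \<in> pats n" and w: "\<omega> \<in> space M"
  {
    assume "\<omega> \<in> atom M X n x"
    then have h: "\<forall>i<n. X i \<omega> = x i" by (simp add: atom_def)
    show "pat X n \<omega> = x"
    proof
      fix i show "pat X n \<omega> i = x i"
      proof (cases "i < n")
        case True then show ?thesis using h by (simp add: pat_def)
      next
        case False then show ?thesis using x by (auto simp: pat_def pats_def)
      qed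
    qed
  }
  {
    assume "pat X n \<omega> = x"
    then have "\<forall>i<n. X i \<omega> = x i" by (auto simp: pat_def)
    then show "\<omega> \<in> atom M X n x" using w by (simp add: atom_def)
  }
qed

lemma den_eq: "(LINT t|lborel. Lk n x t * beta_density a b t) =
   Beta (a + card {i. i < n \<and> x i}) (b + card {i. i < n \<and> \<not> x i}) / Beta a b"
  unfolding Lk_def by (rule beta_moment(2)[OF a b])

lemma den_pos: "(LINT t|lborel. Lk n x t * beta_density a b t) > 0"
  unfolding den_eq using Beta_ab a b by (intro divide_pos_pos Beta_pos) auto

lemma theta_in: "AE \<omega> in M. 0 < \<theta> \<omega> \<and> \<theta> \<omega> < 1"
proof -
  interpret prob_space M by (rule ps)
  let ?N = "{\<omega> \<in> space M. \<theta> \<omega> \<in> - {0<..<1} \<and> (\<forall>i<0. X i \<omega> = (\<lambda>_. False) i)}"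
  have N: "?N \<in> sets M" by measurable
  have "measure M ?N = (LINT t: - {0<..<1}|lborel. t ^ card {i. i < (0::nat) \<and> False} * (1 - t) ^ card {i. i < (0::nat) \<and> \<not> False}
                            * beta_density a b t)"
    by (rule model_eq) simp
  also have "\<dots> = 0"
  proof -
    have pt: "\<And>t. indicator (- {0<..<1}) t *\<^sub>R (t ^ card {i. i < (0::nat) \<and> False} * (1 - t) ^ card {i. i < (0::nat) \<and> \<not> False}
                            * beta_density a b t) = (0::real)"
      by (simp add: beta_density_def indicator_def)
    have "(LBINT t:- {0<..<1}. t ^ card {i. i < (0::nat) \<and> False} * (1 - t) ^ card {i. i < (0::nat) \<and> \<not> False}
                            * beta_density a b t) = integral\<^sup>L (lborel::real measure) (\<lambda>_. 0::real)"
      unfolding set_lebesgue_integral_def by (rule Bochner_Integration.integral_cong) (rule refl, rule pt)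
    then show ?thesis by simp
  qed
  finally have m0: "measure M ?N = 0" .
  have "emeasure M ?N = ennreal (measure M ?N)" by (rule emeasure_eq_measure)
  then have e0: "emeasure M ?N = 0" unfolding m0 by simp
  have se: "{\<omega> \<in> space M. \<not> (0 < \<theta> \<omega> \<and> \<theta> \<omega> < 1)} = ?N" by auto
  show ?thesis using AE_iff_measurable[OF N se] e0 by (rule iffD2)
qed

lemma per_atom:
  assumes h[measurable]: "h \<in> borel_measurable borel" and x: "x \<in> pats n"
  shows "(\<integral>\<omega>. indicator (atom M X n x) \<omega> * cval a b n (pat X n \<omega>) h \<partial>M)
     = (LINT t|lborel. Lk n x t * beta_density a b t * h t)"
proof -
  have "(\<integral>\<omega>. indicator (atom M X n x) \<omega> * cval a b n (pat X n \<omega>) h \<partial>M)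
      = (\<integral>\<omega>. indicator (atom M X n x) \<omega> * 1 * cval a b n x h \<partial>M)"
    by (intro Bochner_Integration.integral_cong refl) (auto simp: indicator_def in_atom_iff[OF x])
  also have "\<dots> = (LINT t|lborel. Lk n x t * beta_density a b t * 1) * cval a b n x h"
    using set_int_theta[of "\<lambda>_. 1" n x] by (simp only: integral_mult_left_zero borel_measurable_const)
  also have "\<dots> = (LINT t|lborel. Lk n x t * beta_density a b t * h t)"
    using den_pos[of n x] by (simp add: cval_def)
  finally show ?thesis .
qed

lemma cond_exp:
  assumes h[measurable]: "h \<in> borel_measurable borel" and hb: "\<And>t. 0 < t \<Longrightarrow> t < 1 \<Longrightarrow> \<bar>h t\<bar> \<le> 1"
  shows "AE \<omega> in M. real_cond_exp M (obs_filtration M X n) (\<lambda>\<omega>. h (\<theta> \<omega>)) \<omega> = cval a b n (pat X n \<omega>) h"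
proof -
  interpret sigma_finite_subalgebra M "obs_filtration M X n" by (rule sfs)
  interpret prob_space M by (rule ps)
  let ?F = "obs_filtration M X n"
  let ?\<psi> = "\<lambda>\<omega>. cval a b n (pat X n \<omega>) h"
  have fi: "integrable M (\<lambda>\<omega>. h (\<theta> \<omega>))"
  proof (rule integrable_const_bound[where B=1])
    show "AE x in M. norm (h (\<theta> x)) \<le> 1" using theta_in by eventually_elim (simp add: hb)
  qed simp
  have rep: "?\<psi> \<omega> = (\<Sum>x\<in>pats n. cval a b n x h * indicator (atom M X n x) \<omega>)" if w: "\<omega> \<in> space M" for \<omega>
  proof -
    have "(\<Sum>x\<in>pats n. cval a b n x h * indicator (atom M X n x) \<omega>)
        = (\<Sum>x\<in>pats n. if x = pat X n \<omega> then cval a b n x h else 0)"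
      by (intro sum.cong refl) (simp add: indicator_def in_atom_iff w)
    also have "\<dots> = ?\<psi> \<omega>" by (simp add: sum.delta finite_pats pat_pats)
    finally show ?thesis by simp
  qed
  have eqF: "\<And>\<omega>. \<omega> \<in> space ?F \<Longrightarrow> ?\<psi> \<omega> = (\<Sum>x\<in>pats n. cval a b n x h * indicator (atom M X n x) \<omega>)"
    using rep by (simp add: space_obs)
  have smF: "(\<lambda>\<omega>. \<Sum>x\<in>pats n. cval a b n x h * indicator (atom M X n x) \<omega>) \<in> borel_measurable ?F"
  proof (rule borel_measurable_sum)
    fix x show "(\<lambda>\<omega>. cval a b n x h * indicator (atom M X n x) \<omega>) \<in> borel_measurable ?F"
      by (rule borel_measurable_times[OF borel_measurable_const borel_measurable_indicator[OF atom_F]])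
  qed
  have psi_F: "?\<psi> \<in> borel_measurable ?F"
    using measurable_cong[of ?F ?\<psi> _ borel, OF eqF] smF by blast
  have sumint: "integrable M (\<lambda>\<omega>. \<Sum>x\<in>pats n. cval a b n x h * indicator (atom M X n x) \<omega>)"
  proof (rule Bochner_Integration.integrable_sum)
    fix x
    have "emeasure M (atom M X n x) < \<infinity>" by (simp add: less_top[symmetric])
    then have "integrable M (indicator (atom M X n x) :: 'w \<Rightarrow> real)"
      by (rule integrable_real_indicator[OF atom_M])
    then show "integrable M (\<lambda>\<omega>. cval a b n x h * indicator (atom M X n x) \<omega>)"
      by (rule integrable_mult_right)
  qed
  have psi_int: "integrable M ?\<psi>"
  proof -
    have "integrable M ?\<psi> = integrable M (\<lambda>\<omega>. \<Sum>x\<in>pats n. cval a b n x h * indicator (atom M X n x) \<omega>)"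
      by (rule Bochner_Integration.integrable_cong) (simp_all add: rep)
    then show ?thesis using sumint by simp
  qed
  have decomp: "(LINT \<omega>:A|M. u \<omega>) = (\<Sum>x\<in>pat X n ` A. \<integral>\<omega>. indicator (atom M X n x) \<omega> * u \<omega> \<partial>M)"
    if A: "A \<in> sets ?F" and u: "integrable M u" for A and u :: "'w \<Rightarrow> real"
  proof -
    have T: "pat X n ` A \<subseteq> pats n" by (simp add: image_subset_iff pat_pats)
    then have fT: "finite (pat X n ` A)" using finite_pats finite_subset by blast
    have sat: "A \<subseteq> space M \<and> (\<forall>\<omega>\<in>A. \<forall>\<omega>'\<in>space M. (\<forall>i<n. X i \<omega> = X i \<omega>') \<longrightarrow> \<omega>' \<in> A)"
      by (rule saturated[OF A])
    have ind: "indicator A \<omega> = (\<Sum>x\<in>pat X n ` A. indicator (atom M X n x) \<omega> :: real)" if w: "\<omega> \<in> space M" for \<omega>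
    proof -
      have "(\<Sum>x\<in>pat X n ` A. indicator (atom M X n x) \<omega> :: real) = (\<Sum>x\<in>pat X n ` A. if x = pat X n \<omega> then 1 else 0)"
        using T by (intro sum.cong refl) (auto simp: indicator_def in_atom_iff w)
      also have "\<dots> = (if pat X n \<omega> \<in> pat X n ` A then 1 else 0)" using fT by (simp add: sum.delta)
      also have "(pat X n \<omega> \<in> pat X n ` A) = (\<omega> \<in> A)"
      proof
        assume "pat X n \<omega> \<in> pat X n ` A"
        then obtain \<omega>' where "\<omega>' \<in> A" "pat X n \<omega> = pat X n \<omega>'" by auto
        then have "\<forall>i<n. X i \<omega>' = X i \<omega>" by (auto simp: pat_def fun_eq_iff)
        then show "\<omega> \<in> A" using sat \<open>\<omega>' \<in> A\<close> w by blast
      qed auto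
      finally show ?thesis by (simp add: indicator_def)
    qed
    have "(LINT \<omega>:A|M. u \<omega>) = (\<integral>\<omega>. (\<Sum>x\<in>pat X n ` A. indicator (atom M X n x) \<omega> * u \<omega>) \<partial>M)"
      unfolding set_lebesgue_integral_def
      by (intro Bochner_Integration.integral_cong refl) (simp only: ind real_scaleR_def sum_distrib_right)
    also have "\<dots> = (\<Sum>x\<in>pat X n ` A. \<integral>\<omega>. indicator (atom M X n x) \<omega> * u \<omega> \<partial>M)"
    proof (rule Bochner_Integration.integral_sum)
      fix x
      have "integrable M (\<lambda>\<omega>. indicator (atom M X n x) \<omega> *\<^sub>R u \<omega>)" by (rule integrable_mult_indicator[OF atom_M u])
      then show "integrable M (\<lambda>\<omega>. indicator (atom M X n x) \<omega> * u \<omega>)" by (simp only: real_scaleR_def)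
    qed
    finally show ?thesis .
  qed
  show ?thesis
  proof (rule real_cond_exp_charact[OF _ fi psi_int psi_F])
    fix A assume A: "A \<in> sets ?F"
    have T: "pat X n ` A \<subseteq> pats n" by (simp add: image_subset_iff pat_pats)
    show "(LINT \<omega>:A|M. h (\<theta> \<omega>)) = (LINT \<omega>:A|M. ?\<psi> \<omega>)"
      unfolding decomp[OF A fi] decomp[OF A psi_int]
    proof (rule sum.cong[OF refl])
      fix x assume "x \<in> pat X n ` A"
      then have x: "x \<in> pats n" using T by blast
      show "(\<integral>\<omega>. indicator (atom M X n x) \<omega> * h (\<theta> \<omega>) \<partial>M) = (\<integral>\<omega>. indicator (atom M X n x) \<omega> * ?\<psi> \<omega> \<partial>M)"
        unfolding per_atom[OF h x] set_int_theta[OF h] ..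
    qed
  qed
qed

end


lemma Beta_prod:
  fixes p q :: real assumes p: "p > 0" and q: "q > 0"
  shows "Beta p (q + real k) = Beta p q * (\<Prod>j<k. (q + real j) / (p + q + real j))"
proof (induction k)
  case 0
  then show ?case by simp
next
  case (Suc k)
  have nz: "q + real k \<notin> \<int>\<^sub>\<le>\<^sub>0" using q by (auto dest: nonpos_Ints_nonpos)
  have "(p + (q + real k)) * Beta p (q + real k + 1) = (q + real k) * Beta p (q + real k)"
    by (rule Beta_plus1_right[OF nz])
  moreover have "p + (q + real k) > 0" using p q by simp
  ultimately have "Beta p (q + real k + 1) = (q + real k) / (p + q + real k) * Beta p (q + real k)"
    by (simp add: field_simps)
  moreover have "q + real (Suc k) = q + real k + 1" by simp
  ultimately have "Beta p (q + real (Suc k)) = (q + real k) / (p + q + real k) * Beta p (q + real k)"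
    by (simp only:)
  also have "\<dots> = Beta p q * (\<Prod>j<Suc k. (q + real j) / (p + q + real j))"
    unfolding Suc.IH prod.lessThan_Suc by (simp only: mult_ac)
  finally show ?case .
qed

lemma prod_diff_le:
  fixes x y :: "nat \<Rightarrow> real"
  assumes "\<And>j. j < k \<Longrightarrow> 0 \<le> x j \<and> x j \<le> 1 \<and> 0 \<le> y j \<and> y j \<le> 1"
  shows "\<bar>(\<Prod>j<k. x j) - (\<Prod>j<k. y j)\<bar> \<le> (\<Sum>j<k. \<bar>x j - y j\<bar>)"
  using assms
proof (induction k)
  case 0
  then show ?case by simp
next
  case (Suc k)
  let ?X = "\<Prod>j<k. x j" and ?Y = "\<Prod>j<k. y j"
  have ih: "\<bar>?X - ?Y\<bar> \<le> (\<Sum>j<k. \<bar>x j - y j\<bar>)" using Suc by simp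
  have b: "0 \<le> x k" "x k \<le> 1" "0 \<le> y k" "y k \<le> 1" using Suc.prems[of k] by auto
  have Y: "0 \<le> ?Y" "?Y \<le> 1" using Suc.prems by (auto intro!: prod_nonneg prod_le_1)
  have "\<bar>?X * x k - ?Y * y k\<bar> = \<bar>x k * (?X - ?Y) + (x k - y k) * ?Y\<bar>" by (simp add: algebra_simps)
  also have "\<dots> \<le> \<bar>x k\<bar> * \<bar>?X - ?Y\<bar> + \<bar>x k - y k\<bar> * \<bar>?Y\<bar>" by (metis abs_mult abs_triangle_ineq)
  also have "\<dots> \<le> 1 * \<bar>?X - ?Y\<bar> + \<bar>x k - y k\<bar> * 1"
    using b Y by (intro add_mono mult_right_mono mult_left_mono) auto
  also have "\<dots> \<le> (\<Sum>j<k. \<bar>x j - y j\<bar>) + \<bar>x k - y k\<bar>" using ih by simp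
  finally show ?case by (simp add: mult.commute)
qed

lemma key_bound:
  fixes p q :: real assumes p: "p > 0" and q: "q > 0"
  shows "\<bar>(\<Prod>j<k. (q + real j) / (p + q + real j)) - (1 - p / (p + q)) ^ k\<bar> \<le> real k * real k / (p + q)"
proof -
  let ?N = "p + q"
  have N: "?N > 0" using p q by simp
  have e: "(1 - p / ?N) ^ k = (\<Prod>j<k. q / ?N)" using N by (simp add: field_simps)
  have "\<bar>(\<Prod>j<k. (q + real j) / (?N + real j)) - (\<Prod>j<k. q / ?N)\<bar> \<le> (\<Sum>j<k. \<bar>(q + real j) / (?N + real j) - q / ?N\<bar>)"
    by (rule prod_diff_le) (use p q in \<open>auto simp: field_simps\<close>)
  also have "\<dots> \<le> (\<Sum>j<k. real k / ?N)"
  proof (rule sum_mono)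
    fix j assume j: "j \<in> {..<k}"
    have "(q + real j) / (?N + real j) - q / ?N = real j * p / (?N * (?N + real j))"
      using N by (simp add: field_simps)
    also have "\<dots> \<ge> 0" using p N by simp
    ultimately have "\<bar>(q + real j) / (?N + real j) - q / ?N\<bar> = real j * p / (?N * (?N + real j))" by (metis abs_of_nonneg)
    also have "\<dots> \<le> real j / ?N"
    proof -
      have le1: "p / (?N + real j) \<le> 1" using p q by simp
      have "real j / ?N * (p / (?N + real j)) \<le> real j / ?N * 1"
        by (rule mult_left_mono[OF le1]) (use N in simp)
      then have i1: "real j / ?N * (p / (?N + real j)) \<le> real j / ?N" by (simp only: mult_1_right)
      have e1: "real j * p / (?N * (?N + real j)) = real j / ?N * (p / (?N + real j))" by simp
      show ?thesis unfolding e1 by (rule i1)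
    qed
    also have "\<dots> \<le> real k / ?N" using j N by (simp add: divide_right_mono)
    finally show "\<bar>(q + real j) / (?N + real j) - q / ?N\<bar> \<le> real k / ?N" .
  qed
  also have "\<dots> = real k * real k / ?N" by simp
  finally show ?thesis unfolding e by (simp add: add.assoc)
qed

lemma card_split: "card {i. i < n \<and> P i} + card {i. i < n \<and> \<not> P i} = n"
proof -
  have "card ({i. i < n \<and> P i} \<union> {i. i < n \<and> \<not> P i}) = card {i. i < n \<and> P i} + card {i. i < n \<and> \<not> P i}"
    by (rule card_Un_disjoint) auto
  moreover have "{i. i < n \<and> P i} \<union> {i. i < n \<and> \<not> P i} = {..<n}" by auto
  ultimately show ?thesis by simp
qed

context bbm begin

lemma cval_pow:
  "cval a b n x (\<lambda>t. (1 - t) ^ k) =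
    (\<Prod>j<k. ((b + card {i. i < n \<and> \<not> x i}) + real j) / ((a + card {i. i < n \<and> x i}) + (b + card {i. i < n \<and> \<not> x i}) + real j))"
proof -
  let ?s = "card {i. i < n \<and> x i}" and ?f = "card {i. i < n \<and> \<not> x i}"
  have p: "a + ?s > 0" and q: "b + ?f > 0" using a b by auto
  have "(LINT t|lborel. Lk n x t * beta_density a b t * (1 - t) ^ k) = (LINT t|lborel. t ^ ?s * (1 - t) ^ (?f + k) * beta_density a b t)"
    by (rule Bochner_Integration.integral_cong) (simp_all add: Lk_def power_add mult_ac)
  also have "\<dots> = Beta (a + ?s) (b + real (?f + k)) / Beta a b" by (rule beta_moment(2)[OF a b])
  finally have num: "(LINT t|lborel. Lk n x t * beta_density a b t * (1 - t) ^ k) = Beta (a + ?s) ((b + ?f) + real k) / Beta a b"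
    by (simp add: add.assoc)
  show ?thesis unfolding cval_def num den_eq Beta_prod[OF p q]
    using Beta_ab Beta_pos[OF p q] by simp
qed

lemma cval_id:
  "cval a b n x (\<lambda>t. t) = (a + card {i. i < n \<and> x i}) / ((a + card {i. i < n \<and> x i}) + (b + card {i. i < n \<and> \<not> x i}))"
proof -
  let ?s = "card {i. i < n \<and> x i}" and ?f = "card {i. i < n \<and> \<not> x i}"
  have p: "a + ?s > 0" and q: "b + ?f > 0" using a b by auto
  have "(LINT t|lborel. Lk n x t * beta_density a b t * t) = (LINT t|lborel. t ^ (?s + 1) * (1 - t) ^ ?f * beta_density a b t)"
    by (rule Bochner_Integration.integral_cong) (simp_all add: Lk_def power_add mult_ac)
  also have "\<dots> = Beta (a + real (?s + 1)) (b + ?f) / Beta a b" by (rule beta_moment(2)[OF a b])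
  moreover have "a + real (?s + 1) = (a + ?s) + 1" by simp
  ultimately have num: "(LINT t|lborel. Lk n x t * beta_density a b t * t) = Beta ((a + ?s) + 1) (b + ?f) / Beta a b"
    by (simp only:)
  have nz: "a + ?s \<notin> \<int>\<^sub>\<le>\<^sub>0" using p by (auto dest: nonpos_Ints_nonpos)
  have "((a + ?s) + (b + ?f)) * Beta ((a + ?s) + 1) (b + ?f) = (a + ?s) * Beta (a + ?s) (b + ?f)"
    by (rule Beta_plus1_left[OF nz])
  then have "Beta ((a + ?s) + 1) (b + ?f) = (a + ?s) / ((a + ?s) + (b + ?f)) * Beta (a + ?s) (b + ?f)"
    using p q by (simp add: field_simps)
  then show ?thesis unfolding cval_def num den_eq
    using Beta_ab Beta_pos[OF p q] by simp
qed

end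


lemma lim_aux:
  fixes K :: "nat \<Rightarrow> nat" and c :: real
  assumes o: "(\<lambda>n. real (K n)) \<in> o(\<lambda>n. sqrt (real n))" and c: "c > 0"
  shows "(\<lambda>n. real (K n) * real (K n) / (c + real n)) \<longlonglongrightarrow> 0"
proof (rule tendsto_sandwich[where f="\<lambda>_. 0" and h="\<lambda>n. (real (K n) / sqrt (real n)) * (real (K n) / sqrt (real n))"])
  have t: "((\<lambda>n. real (K n) / sqrt (real n)) \<longlongrightarrow> 0) at_top" by (rule smalloD_tendsto[OF o])
  show "((\<lambda>n. (real (K n) / sqrt (real n)) * (real (K n) / sqrt (real n))) \<longlongrightarrow> 0) sequentially"
    using tendsto_mult[OF t t] by simp
  show "\<forall>\<^sub>F n in sequentially. 0 \<le> real (K n) * real (K n) / (c + real n)"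
    using c by (intro always_eventually allI) simp
  show "\<forall>\<^sub>F n in sequentially. real (K n) * real (K n) / (c + real n) \<le> (real (K n) / sqrt (real n)) * (real (K n) / sqrt (real n))"
  proof (rule eventually_sequentiallyI[of 1])
    fix n :: nat assume n: "1 \<le> n"
    have "(real (K n) / sqrt (real n)) * (real (K n) / sqrt (real n)) = real (K n) * real (K n) / real n"
      using n by (simp add: power2_eq_square[symmetric] power_divide)
    moreover have "real (K n) * real (K n) / (c + real n) \<le> real (K n) * real (K n) / real n"
      using n c by (intro divide_left_mono) auto
    ultimately show "real (K n) * real (K n) / (c + real n) \<le> (real (K n) / sqrt (real n)) * (real (K n) / sqrt (real n))"
      by simp
  qed
qed simp

lemma Max_bounds:
  fixes g :: "nat \<Rightarrow> real"
  assumes "m \<ge> 1" and "\<And>k. k \<in> {1..m} \<Longrightarrow> 0 \<le> g k \<and> g k \<le> U"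
  shows "0 \<le> Max (g ` {1..m}) \<and> Max (g ` {1..m}) \<le> U"
proof -
  have ne: "g ` {1..m} \<noteq> {}" using assms(1) by auto
  have "g 1 \<le> Max (g ` {1..m})" using assms(1) by (intro Max_ge) auto
  moreover have "0 \<le> g 1" using assms by auto
  moreover have "Max (g ` {1..m}) \<le> U" using assms(2) ne by (subst Max_le_iff) auto
  ultimately show ?thesis by linarith
qed

context bbm begin

lemma card_pat: "card {i. i < n \<and> pat X n \<omega> i} = card {i. i < n \<and> X i \<omega>}"
  "card {i. i < n \<and> \<not> pat X n \<omega> i} = card {i. i < n \<and> \<not> X i \<omega>}"
  unfolding pat_def by (rule arg_cong[where f=card], blast)+

lemma pointwise_bound:
  assumes e1: "real_cond_exp M (obs_filtration M X n) (\<lambda>\<omega>'. (1 - \<theta> \<omega>') ^ k) \<omega> = cval a b n (pat X n \<omega>) (\<lambda>t. (1 - t) ^ k)"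
    and e2: "real_cond_exp M (obs_filtration M X n) \<theta> \<omega> = cval a b n (pat X n \<omega>) (\<lambda>t. t)"
  shows "\<bar>real_cond_exp M (obs_filtration M X n) (\<lambda>\<omega>'. (1 - \<theta> \<omega>') ^ k) \<omega>
                   - (1 - real_cond_exp M (obs_filtration M X n) \<theta> \<omega>) ^ k\<bar> \<le> real k * real k / (a + b + real n)"
proof -
  let ?p = "a + real (card {i. i < n \<and> X i \<omega>})" and ?q = "b + real (card {i. i < n \<and> \<not> X i \<omega>})"
  have p: "?p > 0" and q: "?q > 0" using a b by auto
  have pq: "?p + ?q = a + b + real n" using card_split[of n "\<lambda>i. X i \<omega>"]
    by (metis (no_types, lifting) add.assoc add.left_commute of_nat_add)
  have "\<bar>(\<Prod>j<k. (?q + real j) / (?p + ?q + real j)) - (1 - ?p / (?p + ?q)) ^ k\<bar> \<le> real k * real k / (?p + ?q)"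
    by (rule key_bound[OF p q])
  then show ?thesis unfolding e1 e2 cval_pow cval_id card_pat pq .
qed

end

theorem proposition9p2:
  fixes M :: "'w measure" and a b :: real
    and \<theta> :: "'w \<Rightarrow> real" and X :: "nat \<Rightarrow> 'w \<Rightarrow> bool" and K :: "nat \<Rightarrow> nat"
  assumes "a > 0" and "b > 0"
    and "beta_bernoulli_model M a b \<theta> X"
    and "\<And>n. K n \<ge> 1"
    and "(\<lambda>n. real (K n)) \<in> o(\<lambda>n. sqrt (real n))"
  shows "AE \<omega> in M.
    (\<lambda>n. Max ((\<lambda>k. \<bar>real_cond_exp M (obs_filtration M X n) (\<lambda>\<omega>'. (1 - \<theta> \<omega>') ^ k) \<omega>
                   - (1 - real_cond_exp M (obs_filtration M X n) \<theta> \<omega>) ^ k\<bar>) ` {1..K n}))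
    \<longlonglongrightarrow> 0"
proof -
  interpret bbm M a b \<theta> X using assms(1-3) by (simp add: bbm_def)
  have h1: "(\<lambda>t::real. (1 - t) ^ k) \<in> borel_measurable borel" for k by measurable
  have b1: "\<bar>(1 - t) ^ k\<bar> \<le> 1" if "0 < t" "t < 1" for t :: real and k
    using that by (simp add: power_le_one)
  have E1: "AE \<omega> in M. \<forall>n k. real_cond_exp M (obs_filtration M X n) (\<lambda>\<omega>'. (1 - \<theta> \<omega>') ^ k) \<omega> = cval a b n (pat X n \<omega>) (\<lambda>t. (1 - t) ^ k)"
    unfolding AE_all_countable
  proof (intro allI)
    fix n k
    show "AE \<omega> in M. real_cond_exp M (obs_filtration M X n) (\<lambda>\<omega>'. (1 - \<theta> \<omega>') ^ k) \<omega> = cval a b n (pat X n \<omega>) (\<lambda>t. (1 - t) ^ k)"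
      using cond_exp[of "\<lambda>t. (1 - t) ^ k" n, OF h1 b1] by simp
  qed
  have E2: "AE \<omega> in M. \<forall>n. real_cond_exp M (obs_filtration M X n) \<theta> \<omega> = cval a b n (pat X n \<omega>) (\<lambda>t. t)"
    unfolding AE_all_countable
  proof (intro allI)
    fix n
    show "AE \<omega> in M. real_cond_exp M (obs_filtration M X n) \<theta> \<omega> = cval a b n (pat X n \<omega>) (\<lambda>t. t)"
      using cond_exp[of "\<lambda>t. t" n] by simp
  qed
  show ?thesis
    using E1 E2
  proof eventually_elim
    case (elim \<omega>)
    let ?D = "\<lambda>n. Max ((\<lambda>k. \<bar>real_cond_exp M (obs_filtration M X n) (\<lambda>\<omega>'. (1 - \<theta> \<omega>') ^ k) \<omega>
                   - (1 - real_cond_exp M (obs_filtration M X n) \<theta> \<omega>) ^ k\<bar>) ` {1..K n})"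
    have bnd: "0 \<le> ?D n \<and> ?D n \<le> real (K n) * real (K n) / (a + b + real n)" for n
    proof (rule Max_bounds[OF assms(4)])
      fix k assume k: "k \<in> {1..K n}"
      have "\<bar>real_cond_exp M (obs_filtration M X n) (\<lambda>\<omega>'. (1 - \<theta> \<omega>') ^ k) \<omega>
                   - (1 - real_cond_exp M (obs_filtration M X n) \<theta> \<omega>) ^ k\<bar> \<le> real k * real k / (a + b + real n)"
        using elim by (intro pointwise_bound) auto
      also have "\<dots> \<le> real (K n) * real (K n) / (a + b + real n)"
        using k a b by (intro divide_right_mono mult_mono) auto
      finally show "0 \<le> \<bar>real_cond_exp M (obs_filtration M X n) (\<lambda>\<omega>'. (1 - \<theta> \<omega>') ^ k) \<omega>
                   - (1 - real_cond_exp M (obs_filtration M X n) \<theta> \<omega>) ^ k\<bar> \<and>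
           \<bar>real_cond_exp M (obs_filtration M X n) (\<lambda>\<omega>'. (1 - \<theta> \<omega>') ^ k) \<omega>
                   - (1 - real_cond_exp M (obs_filtration M X n) \<theta> \<omega>) ^ k\<bar> \<le> real (K n) * real (K n) / (a + b + real n)"
        by simp
    qed
    have lim: "(\<lambda>n. real (K n) * real (K n) / (a + b + real n)) \<longlonglongrightarrow> 0"
      using lim_aux[OF assms(5), of "a + b"] a b by simp
    show ?case
    proof (rule tendsto_sandwich[OF _ _ tendsto_const lim])
      show "\<forall>\<^sub>F n in sequentially. 0 \<le> ?D n" using bnd by (intro always_eventually allI) blast
      show "\<forall>\<^sub>F n in sequentially. ?D n \<le> real (K n) * real (K n) / (a + b + real n)"
        using bnd by (intro always_eventually allI) blast
    qed
  qed
qed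

end
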